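(* Let $a,b$ be positive integers with $a\le b$, and suppose that every nonnegative integer $n$ can be written as $ax^2+by^2+(z^2+zw+w^2)$ with $x,y,z,w\in\mathbb{Z}$. Then $a\in\{1,2\}$. *)

theory Defs
  imports Main
begin

end

theory Submission
  imports Defs
begin

lemma sq_ge4: "\<bar>w::int\<bar> \<ge> 2 \<Longrightarrow> w^2 \<ge> 4"
  using abs_le_square_iff[of 2 w] by simp

lemma sq_ge1: "(w::int) \<noteq> 0 \<Longrightarrow> w^2 \<ge> 1"
proof -
  assume "w \<noteq> 0"
  hence "1 \<le> \<bar>w\<bar>" by arith
  thus ?thesis using abs_le_square_iff[of 1 w] by simp
qed

lemma not2: "(z::int)^2 + z*w + w^2 \<noteq> 2"
proof
  assume h: "z^2 + z*w + w^2 = 2"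
  have e: "(2*z+w)^2 + 3*w^2 = 8" using h by (simp add: power2_eq_square algebra_simps)
  have "w^2 \<le> 2" using e zero_le_power2[of "2*z+w"] by linarith
  hence "\<bar>w\<bar> < 2" using sq_ge4[of w] by linarith
  hence "w = 0 \<or> w = 1 \<or> w = -1" by auto
  then show False
  proof (elim disjE)
    assume "w = 0" then have "z^2 = 2" using h by simp
    then have "\<bar>z\<bar> < 2" using sq_ge4[of z] by linarith
    then have "z = 0 \<or> z = 1 \<or> z = -1" by auto
    then show False using \<open>z^2 = 2\<close> by auto
  next
    assume "w = 1" then have "z*(z+1) = 1" using h by (simp add: power2_eq_square algebra_simps)
    then show False by (auto simp add: zmult_eq_1_iff)
  next
    assume "w = -1" then have "z*(z-1) = 1" using h by (simp add: power2_eq_square algebra_simps)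
    then show False by (auto simp add: zmult_eq_1_iff)
  qed
qed

theorem lemma3p1:
  fixes a b :: int
  assumes "0 < a" and "a \<le> b"
    and "\<forall>n::int. n \<ge> 0 \<longrightarrow>
           (\<exists>x y z w :: int. n = a * x^2 + b * y^2 + (z^2 + z * w + w^2))"
  shows "a \<in> {1, 2}"
proof (rule ccontr)
  assume "a \<notin> {1,2}"
  hence a3: "a \<ge> 3" using assms(1) by auto
  obtain x y z w :: int where e: "2 = a * x^2 + b * y^2 + (z^2 + z * w + w^2)"
    using assms(3)[rule_format, of 2] by auto
  have q: "z^2 + z * w + w^2 \<ge> 0"
  proof -
    have "4*(z^2 + z * w + w^2) = (2*z+w)^2 + 3*w^2" by (simp add: power2_eq_square algebra_simps)
    moreover have "(2*z+w)^2 + 3*w^2 \<ge> 0" by simp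
    ultimately have "4*(z^2 + z * w + w^2) \<ge> 0" by (simp only:)
    thus ?thesis by simp
  qed
  have bnn: "b * y^2 \<ge> 0" using assms by simp
  have ax: "a * x^2 = 0"
  proof (cases "x = 0")
    case False
    hence "x^2 \<ge> 1" by (rule sq_ge1)
    hence "a * x^2 \<ge> a * 1" using a3 by (intro mult_left_mono) auto
    then show ?thesis using e q bnn a3 by linarith
  qed simp
  have by0: "b * y^2 = 0"
  proof (cases "y = 0")
    case False
    hence "y^2 \<ge> 1" by (rule sq_ge1)
    hence "b * y^2 \<ge> b * 1" using a3 assms(2) by (intro mult_left_mono) auto
    then show ?thesis using e q ax a3 assms(2) by linarith
  qed simp
  show False using e ax by0 not2[of z w] by simp
qed

end
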